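(* Let $U$ be a unicyclic graph with an edge $\ell u\in E(U)$ such that $\deg(\ell)=1$ and $u\notin V(\operatorname{Cycles}(U))$. (i) If $v\in V(\operatorname{Cycles}(U))$, then there exists a u-switch $\tau$ over $U$ such that $\ell v\in E(\tau(U))$. (ii) If $v\notin V(\operatorname{Cycles}(U))$, $v\neq u$ and $\deg(v)\ge2$, then there exists a u-switch $\tau$ over $U$ such that $\ell v\in E(\tau(U))$.
   Context: Graphs are finite, simple, undirected, labeled. A unicyclic graph is a connected graph with exactly one cycle. For vertices $a,b,c,d$, $A=\binom{a\ b}{c\ d}$ is interchangeable in $G$ if $ab,cd\in E(G)$, $\{a,b\}\cap\{c,d\}=\varnothing$, $ac,bd\notin E(G)$; the 2-switch $\tau_A$ sends $G$ to $G-ab-cd+ac+bd$ if $A$ is interchangeable and to $G$ otherwise (trivial). A nontrivial 2-switch $\tau$ over a unicyclic $U$ is a u-switch if $\tau(U)$ is unicyclic. $\operatorname{Cycles}(G)$ is the subgraph induced by vertices lying on some cycle of $G$. *)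

theory Defs
  imports Main
begin

definition simple_graph :: "'a set \<Rightarrow> 'a set set \<Rightarrow> bool" where
  "simple_graph V E \<longleftrightarrow> finite V \<and>
     (\<forall>e\<in>E. \<exists>x y. x \<noteq> y \<and> x \<in> V \<and> y \<in> V \<and> e = {x, y})"

definition adj :: "'a set set \<Rightarrow> 'a \<Rightarrow> 'a \<Rightarrow> bool" where
  "adj E x y \<longleftrightarrow> {x, y} \<in> E"

definition degree :: "'a set \<Rightarrow> 'a set set \<Rightarrow> 'a \<Rightarrow> nat" where
  "degree V E v = card {w \<in> V. {v, w} \<in> E}"

definition connected_graph :: "'a set \<Rightarrow> 'a set set \<Rightarrow> bool" where
  "connected_graph V E \<longleftrightarrow> V \<noteq> {} \<and> (\<forall>x\<in>V. \<forall>y\<in>V. (adj E)\<^sup>*\<^sup>* x y)"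

text \<open>A cycle is given by a cyclic list of at least 3 distinct vertices, consecutive ones
  (cyclically) adjacent; as a subgraph it is determined by its edge set.\<close>

definition is_cycle_list :: "'a set set \<Rightarrow> 'a list \<Rightarrow> bool" where
  "is_cycle_list E xs \<longleftrightarrow> length xs \<ge> 3 \<and> distinct xs \<and>
     (\<forall>i < length xs. {xs ! i, xs ! ((i + 1) mod length xs)} \<in> E)"

definition cycle_edges :: "'a list \<Rightarrow> 'a set set" where
  "cycle_edges xs = {{xs ! i, xs ! ((i + 1) mod length xs)} | i. i < length xs}"

definition graph_cycles :: "'a set set \<Rightarrow> 'a set set set" where
  "graph_cycles E = {cycle_edges xs | xs. is_cycle_list E xs}"

definition unicyclic :: "'a set \<Rightarrow> 'a set set \<Rightarrow> bool" where
  "unicyclic V E \<longleftrightarrow> simple_graph V E \<and> connected_graph V E \<and> (\<exists>!C. C \<in> graph_cycles E)"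

definition cycle_vertices :: "'a set set \<Rightarrow> 'a set" where
  "cycle_vertices E = {v. \<exists>xs. is_cycle_list E xs \<and> v \<in> set xs}"

definition interchangeable :: "'a set set \<Rightarrow> 'a \<Rightarrow> 'a \<Rightarrow> 'a \<Rightarrow> 'a \<Rightarrow> bool" where
  "interchangeable E a b c d \<longleftrightarrow> {a, b} \<in> E \<and> {c, d} \<in> E \<and> {a, b} \<inter> {c, d} = {} \<and>
     {a, c} \<notin> E \<and> {b, d} \<notin> E"

definition two_switch :: "'a set set \<Rightarrow> 'a \<Rightarrow> 'a \<Rightarrow> 'a \<Rightarrow> 'a \<Rightarrow> 'a set set" where
  "two_switch E a b c d =
     (if interchangeable E a b c d then (E - {{a, b}, {c, d}}) \<union> {{a, c}, {b, d}} else E)"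

definition u_switch :: "'a set \<Rightarrow> 'a set set \<Rightarrow> 'a \<Rightarrow> 'a \<Rightarrow> 'a \<Rightarrow> 'a \<Rightarrow> bool" where
  "u_switch V E a b c d \<longleftrightarrow> interchangeable E a b c d \<and> unicyclic V (two_switch E a b c d)"

end

theory Submission
  imports Defs "HOL-Library.Transitive_Closure_Table"
begin

lemma adj_sym: "adj E x y = adj E y x" by (simp add: adj_def insert_commute)

lemma rt_sym: "(adj E)\<^sup>*\<^sup>* x y \<Longrightarrow> (adj E)\<^sup>*\<^sup>* y x"
proof (induction rule: rtranclp_induct)
  case base then show ?case by simp
next
  case (step y z) then show ?case
    by (metis adj_sym converse_rtranclp_into_rtranclp)
qed

lemma rt_doubleton: "(adj E)\<^sup>*\<^sup>* x y \<Longrightarrow> {p,q} = {x,y} \<Longrightarrow> (adj E)\<^sup>*\<^sup>* p q"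
  by (metis doubleton_eq_iff rt_sym)

lemma rt_mono: "(adj E)\<^sup>*\<^sup>* x y \<Longrightarrow> E \<subseteq> F \<Longrightarrow> (adj F)\<^sup>*\<^sup>* x y"
proof (induction rule: rtranclp_induct)
  case base then show ?case by simp
next
  case (step y z) then show ?case
    by (metis adj_def rtranclp.rtrancl_into_rtrancl subsetD)
qed

lemma walk_map:
  assumes "\<And>p q. R p q \<Longrightarrow> S\<^sup>*\<^sup>* (f p) (f q)" "R\<^sup>*\<^sup>* a b"
  shows "S\<^sup>*\<^sup>* (f a) (f b)"
  using assms(2)
proof (induction rule: rtranclp_induct)
  case base then show ?case by simp
next
  case (step y z) then show ?case using assms(1) by (meson rtranclp_trans)
qed

lemma edge_rt: "{x,y} \<in> E \<Longrightarrow> (adj E)\<^sup>*\<^sup>* x y"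
  by (simp add: adj_def r_into_rtranclp)

lemma three_way:
  assumes "(adj F)\<^sup>*\<^sup>* a b" "{x,y} \<in> F"
  shows "(adj (F-{{x,y}}))\<^sup>*\<^sup>* a b \<or> (adj (F-{{x,y}}))\<^sup>*\<^sup>* x b \<or> (adj (F-{{x,y}}))\<^sup>*\<^sup>* y b"
  using assms(1)
proof (induction rule: rtranclp_induct)
  case base then show ?case by simp
next
  case (step b c)
  show ?case
  proof (cases "{b,c} = {x,y}")
    case True
    then have "c = x \<or> c = y" by (metis doubleton_eq_iff)
    then show ?thesis by auto
  next
    case False
    then have "adj (F-{{x,y}}) b c" using step(2) by (simp add: adj_def)
    then show ?thesis using step(3) by (meson rtranclp.rtrancl_into_rtrancl)
  qed
qed

lemma cyc_edge_in: "is_cycle_list F xs \<Longrightarrow> cycle_edges xs \<subseteq> F"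
  by (auto simp: is_cycle_list_def cycle_edges_def)

lemma cyc_mono: "is_cycle_list F xs \<Longrightarrow> cycle_edges xs \<subseteq> G \<Longrightarrow> is_cycle_list G xs"
  by (auto simp: is_cycle_list_def cycle_edges_def)

lemma cyc_edge_vertices: "g \<in> cycle_edges xs \<Longrightarrow> x \<in> g \<Longrightarrow> x \<in> set xs"
proof -
  assume "g \<in> cycle_edges xs" "x \<in> g"
  then obtain i where i: "i < length xs" "g = {xs ! i, xs ! ((i + 1) mod length xs)}"
    by (auto simp: cycle_edges_def)
  then have "(i + 1) mod length xs < length xs" by (intro mod_less_divisor) auto
  then show ?thesis using i \<open>x \<in> g\<close> by auto
qed

lemma cyc_vert: "is_cycle_list F xs \<Longrightarrow> x \<in> set xs \<Longrightarrow> x \<in> cycle_vertices F"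
  by (auto simp: cycle_vertices_def)

lemma modlt3: "3 \<le> (n::nat) \<Longrightarrow> x mod n < n"
  by (rule mod_less_divisor) simp

lemma mod_suc_lt: "i < n \<Longrightarrow> Suc i mod (n::nat) = (if Suc i < n then Suc i else 0)"
  by (simp add: mod_if)

lemma cyc_two_nbrs:
  assumes "is_cycle_list F xs" "p \<in> set xs"
  shows "\<exists>a b. a \<noteq> b \<and> {p,a} \<in> cycle_edges xs \<and> {p,b} \<in> cycle_edges xs"
proof -
  let ?n = "length xs"
  have n3: "?n \<ge> 3" and dist: "distinct xs" using assms(1) by (auto simp: is_cycle_list_def)
  obtain k where k: "k < ?n" "xs ! k = p" using assms(2) by (metis in_set_conv_nth)
  define j where "j = (if k = 0 then ?n - 1 else k - 1)"
  have j: "j < ?n" "(j + 1) mod ?n = k" using n3 k by (auto simp: j_def mod_suc_lt)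
  have k1: "(k + 1) mod ?n < ?n" using n3 by (simp add: modlt3)
  have ne: "(k + 1) mod ?n \<noteq> j" using n3 k by (auto simp: j_def mod_suc_lt)
  have e1: "{p, xs ! ((k + 1) mod ?n)} \<in> cycle_edges xs"
    unfolding cycle_edges_def using k by blast
  have e2: "{p, xs ! j} \<in> cycle_edges xs"
    unfolding cycle_edges_def using j k by (metis (mono_tags, lifting) insert_commute mem_Collect_eq)
  have "xs ! ((k + 1) mod ?n) \<noteq> xs ! j" using dist k1 j ne by (simp add: nth_eq_iff_index_eq)
  then show ?thesis using e1 e2 by blast
qed

lemma cyc_edge_inj:
  assumes "is_cycle_list F xs" "i < length xs" "k < length xs"
    "{xs!i, xs!((i+1) mod length xs)} = {xs!k, xs!((k+1) mod length xs)}"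
  shows "i = k"
proof -
  let ?n = "length xs"
  have n3: "?n \<ge> 3" and dist: "distinct xs" using assms(1) by (auto simp: is_cycle_list_def)
  have i1: "(i+1) mod ?n < ?n" "(k+1) mod ?n < ?n" using n3 by (simp_all add: modlt3)
  from assms(4) consider "xs!i = xs!k" | "xs!i = xs!((k+1) mod ?n) \<and> xs!((i+1) mod ?n) = xs!k"
    by (metis doubleton_eq_iff)
  then show ?thesis
  proof cases
    case 1 then show ?thesis using dist assms(2,3) by (simp add: nth_eq_iff_index_eq)
  next
    case 2
    then have "i = (k+1) mod ?n" "(i+1) mod ?n = k" using dist assms(2,3) i1
      by (metis nth_eq_iff_index_eq)+
    then show ?thesis using n3 assms(2,3) by (auto simp: mod_suc_lt split: if_splits)
  qed
qed

lemma mod_ne_aux: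
  assumes "i < (n::nat)" "Suc t < n"
  shows "(i + 1 + t) mod n \<noteq> i"
proof (cases "i + 1 + t < n")
  case True then show ?thesis by simp
next
  case False
  then have "(i + 1 + t) mod n = (i + 1 + t - n) mod n" by (simp add: le_mod_geq)
  also have "\<dots> = i + 1 + t - n" using assms by simp
  finally show ?thesis using assms False by simp
qed

lemma cyc_conn_idx:
  assumes cyc: "is_cycle_list F xs" and i: "i < length xs"
  shows "(adj (cycle_edges xs - {{xs!i, xs!((i+1) mod length xs)}}))\<^sup>*\<^sup>* (xs!((i+1) mod length xs)) (xs!i)"
proof -
  let ?n = "length xs"
  let ?D = "cycle_edges xs - {{xs!i, xs!((i+1) mod length xs)}}"
  have n3: "?n \<ge> 3" using cyc by (auto simp: is_cycle_list_def)
  have walk: "t < ?n \<Longrightarrow> (adj ?D)\<^sup>*\<^sup>* (xs!((i+1) mod ?n)) (xs!((i+1+t) mod ?n))" for t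
  proof (induction t)
    case 0 then show ?case by simp
  next
    case (Suc t)
    define k where "k = (i+1+t) mod ?n"
    have k: "k < ?n" using n3 by (simp add: k_def modlt3)
    have kne: "k \<noteq> i" unfolding k_def using mod_ne_aux[OF i] Suc.prems by simp
    have ksuc: "(k+1) mod ?n = (i+1+Suc t) mod ?n" unfolding k_def by (simp add: mod_Suc_eq)
    have ek: "{xs!k, xs!((k+1) mod ?n)} \<in> cycle_edges xs" unfolding cycle_edges_def using k by blast
    have "{xs!k, xs!((k+1) mod ?n)} \<noteq> {xs!i, xs!((i+1) mod ?n)}"
      using cyc_edge_inj[OF cyc k i] kne by metis
    then have "adj ?D (xs!k) (xs!((k+1) mod ?n))" using ek by (simp add: adj_def)
    then have "adj ?D (xs!((i+1+t) mod ?n)) (xs!((i+1+Suc t) mod ?n))" using ksuc k_def by simp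
    moreover have "(adj ?D)\<^sup>*\<^sup>* (xs!((i+1) mod ?n)) (xs!((i+1+t) mod ?n))" using Suc by simp
    ultimately show ?case by (meson rtranclp.rtrancl_into_rtrancl)
  qed
  have "i + 1 + (?n - 1) = i + ?n" using n3 by simp
  then have "(i + 1 + (?n - 1)) mod ?n = i" using i by simp
  then show ?thesis using walk[of "?n - 1"] n3 by simp
qed

lemma cyc_conn:
  assumes cyc: "is_cycle_list F xs" and e: "{p,q} \<in> cycle_edges xs"
  shows "(adj (cycle_edges xs - {{p,q}}))\<^sup>*\<^sup>* p q"
proof -
  obtain i where i: "i < length xs" "{p,q} = {xs!i, xs!((i+1) mod length xs)}"
    using e by (auto simp: cycle_edges_def)
  show ?thesis using cyc_conn_idx[OF cyc i(1)] i(2) rt_doubleton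
    by (metis insert_commute)
qed

lemma rtrancl_path_nth:
  "rtrancl_path r x xs y \<Longrightarrow> (\<forall>i < length xs. r ((x#xs)!i) (xs!i)) \<and> last (x#xs) = y"
proof (induction rule: rtrancl_path.induct)
  case (base x) then show ?case by simp
next
  case (step x y ys z)
  show ?case
  proof (intro conjI allI impI)
    fix i assume "i < length (y # ys)"
    then show "r ((x # y # ys) ! i) ((y # ys) ! i)"
      using step by (cases i) auto
  next
    show "last (x # y # ys) = z" using step by simp
  qed
qed

lemma path_cycle:
  assumes e: "{x,y} \<in> F" and ne: "x \<noteq> y" and c: "(adj (F - {{x,y}}))\<^sup>*\<^sup>* x y"
  shows "\<exists>zs. is_cycle_list F zs \<and> x \<in> set zs"
proof -
  let ?G = "F - {{x,y}}"
  obtain ps where "rtrancl_path (adj ?G) x ps y" using c rtranclp_eq_rtrancl_path by metis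
  then obtain ps' where p: "rtrancl_path (adj ?G) x ps' y" and d: "distinct (x # ps')"
    using rtrancl_path_distinct by metis
  have st: "\<forall>i < length ps'. adj ?G ((x#ps')!i) (ps'!i)" and la: "last (x#ps') = y"
    using rtrancl_path_nth[OF p] by auto
  have "ps' \<noteq> []" using la ne by auto
  moreover have "ps' \<noteq> [y]"
  proof
    assume "ps' = [y]" then have "adj ?G x y" using st by auto
    then show False by (simp add: adj_def)
  qed
  ultimately have len: "length ps' \<ge> 2"
    using la by (cases ps'; cases "tl ps'"; auto)
  let ?zs = "x # ps'"
  have "\<forall>i < length ?zs. {?zs ! i, ?zs ! ((i + 1) mod length ?zs)} \<in> F"
  proof (intro allI impI)
    fix i assume i: "i < length ?zs"
    show "{?zs ! i, ?zs ! ((i + 1) mod length ?zs)} \<in> F"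
    proof (cases "i + 1 < length ?zs")
      case True
      then have "adj ?G (?zs!i) (ps'!i)" using st by simp
      then show ?thesis using True by (simp add: adj_def)
    next
      case False
      then have "i = length ps'" using i by simp
      then have "?zs ! i = y" using la \<open>ps' \<noteq> []\<close> by (simp add: last_conv_nth nth_Cons')
      moreover have "(i + 1) mod length ?zs = 0" using \<open>i = length ps'\<close> by simp
      ultimately show ?thesis using e by (simp add: insert_commute)
    qed
  qed
  then have "is_cycle_list F ?zs" using d len by (simp add: is_cycle_list_def)
  then show ?thesis by auto
qed

lemma common_edge:
  assumes all: "\<forall>ys. is_cycle_list F ys \<longrightarrow> e \<in> cycle_edges ys"
    and c1: "is_cycle_list F ys1" and c2: "is_cycle_list F ys2"
  shows "cycle_edges ys2 \<subseteq> cycle_edges ys1"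
proof
  fix f assume f: "f \<in> cycle_edges ys2"
  show "f \<in> cycle_edges ys1"
  proof (rule ccontr)
    assume nf: "f \<notin> cycle_edges ys1"
    let ?n = "length ys2"
    obtain i where i: "i < ?n" "f = {ys2!i, ys2!((i+1) mod ?n)}"
      using f by (auto simp: cycle_edges_def)
    define p where "p = ys2!i"
    define q where "q = ys2!((i+1) mod ?n)"
    have n3: "?n \<ge> 3" and dist: "distinct ys2" using c2 by (auto simp: is_cycle_list_def)
    have "(i+1) mod ?n \<noteq> i" using n3 i(1) by (auto simp: mod_suc_lt)
    then have pq: "p \<noteq> q" unfolding p_def q_def using dist i(1) n3
      by (simp add: nth_eq_iff_index_eq modlt3)
    have fpq: "f = {p,q}" using i p_def q_def by simp
    have e1: "e \<in> cycle_edges ys1" using all c1 by blast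
    then have fe: "f \<noteq> e" using nf by auto
    have fF: "f \<in> F" using f cyc_edge_in[OF c2] by auto
    have "(adj (cycle_edges ys2 - {f}))\<^sup>*\<^sup>* p q" using cyc_conn[OF c2, of p q] f fpq by simp
    moreover have "cycle_edges ys2 - {f} \<subseteq> F - {f}" using cyc_edge_in[OF c2] by blast
    ultimately have pq1: "(adj (F - {f}))\<^sup>*\<^sup>* p q" by (rule rt_mono)
    have step: "(adj ((F - {e}) - {f}))\<^sup>*\<^sup>* a b" if ab: "adj (F - {f}) a b" for a b
    proof (cases "{a,b} = e")
      case True
      then have "(adj (cycle_edges ys1 - {{a,b}}))\<^sup>*\<^sup>* a b" using cyc_conn[OF c1] e1 by blast
      moreover have "cycle_edges ys1 - {{a,b}} \<subseteq> (F - {e}) - {f}"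
        using True nf cyc_edge_in[OF c1] by auto
      ultimately show ?thesis by (rule rt_mono)
    next
      case False
      then show ?thesis using ab by (simp add: adj_def r_into_rtranclp)
    qed
    have "(adj ((F - {e}) - {f}))\<^sup>*\<^sup>* p q"
      using walk_map[where f="\<lambda>x. x", OF step pq1] by simp
    then obtain zs where zs: "is_cycle_list (F - {e}) zs"
      using path_cycle[of p q "F - {e}"] fF fe fpq pq by auto
    have "cycle_edges zs \<subseteq> F" using cyc_edge_in[OF zs] by blast
    then have "is_cycle_list F zs" using cyc_mono[OF zs] by blast
    then have "e \<in> cycle_edges zs" using all by blast
    then show False using cyc_edge_in[OF zs] by auto
  qed
qed

lemma basics:
  assumes U: "unicyclic V E" and lu: "{l,u} \<in> E" and dl: "degree V E l = 1"
  shows edge_V: "\<And>x y. {x,y} \<in> E \<Longrightarrow> x \<in> V \<and> y \<in> V \<and> x \<noteq> y"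
    and lnb: "\<And>x. {l,x} \<in> E \<Longrightarrow> x = u"
    and lnc: "l \<notin> cycle_vertices E"
    and "\<exists>xs0. is_cycle_list E xs0 \<and> (\<forall>ys. is_cycle_list E ys \<longrightarrow> cycle_edges ys = cycle_edges xs0)"
proof -
  have sg: "simple_graph V E" using U by (simp add: unicyclic_def)
  show ev: "{x,y} \<in> E \<Longrightarrow> x \<in> V \<and> y \<in> V \<and> x \<noteq> y" for x y
  proof -
    assume "{x,y} \<in> E"
    then obtain a b where "a \<noteq> b" "a \<in> V" "b \<in> V" "{x,y} = {a,b}"
      using sg unfolding simple_graph_def by blast
    then show ?thesis by (auto simp: doubleton_eq_iff)
  qed
  let ?S = "{w \<in> V. {l, w} \<in> E}"
  have "card ?S = 1" using dl by (simp add: degree_def)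
  then obtain z where z: "?S = {z}" by (rule card_1_singletonE)
  have "u \<in> ?S" using lu ev[OF lu] by simp
  then have zu: "z = u" using z by simp
  show ln: "{l,x} \<in> E \<Longrightarrow> x = u" for x
  proof -
    assume "{l,x} \<in> E"
    then have "x \<in> ?S" using ev by blast
    then show ?thesis using z zu by simp
  qed
  show "l \<notin> cycle_vertices E"
  proof
    assume "l \<in> cycle_vertices E"
    then obtain xs where xs: "is_cycle_list E xs" "l \<in> set xs" by (auto simp: cycle_vertices_def)
    then obtain a b where "a \<noteq> b" "{l,a} \<in> cycle_edges xs" "{l,b} \<in> cycle_edges xs"
      using cyc_two_nbrs[OF xs] by blast
    then have "{l,a} \<in> E" "{l,b} \<in> E" using cyc_edge_in[OF xs(1)] by blast+
    then show False using ln \<open>a \<noteq> b\<close> by metis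
  qed
  obtain C where C: "C \<in> graph_cycles E" "\<And>C'. C' \<in> graph_cycles E \<Longrightarrow> C' = C"
    using U unfolding unicyclic_def by blast
  then obtain xs0 where xs0: "is_cycle_list E xs0" "C = cycle_edges xs0"
    unfolding graph_cycles_def by blast
  have "\<forall>ys. is_cycle_list E ys \<longrightarrow> cycle_edges ys = cycle_edges xs0"
    using C(2) xs0(2) unfolding graph_cycles_def by blast
  then show "\<exists>xs0. is_cycle_list E xs0 \<and> (\<forall>ys. is_cycle_list E ys \<longrightarrow> cycle_edges ys = cycle_edges xs0)"
    using xs0 by blast
qed

lemma uni_intro:
  assumes "simple_graph V F" "connected_graph V F" "is_cycle_list F xs"
    "\<forall>ys. is_cycle_list F ys \<longrightarrow> cycle_edges ys = cycle_edges xs"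
  shows "unicyclic V F"
proof -
  have "\<exists>!C. C \<in> graph_cycles F"
  proof
    show "cycle_edges xs \<in> graph_cycles F" using assms(3) by (auto simp: graph_cycles_def)
  next
    fix C assume "C \<in> graph_cycles F"
    then show "C = cycle_edges xs" using assms(4) by (auto simp: graph_cycles_def)
  qed
  then show ?thesis using assms(1,2) by (simp add: unicyclic_def)
qed

lemma conn_rt: "connected_graph V E \<Longrightarrow> x \<in> V \<Longrightarrow> y \<in> V \<Longrightarrow> (adj E)\<^sup>*\<^sup>* x y"
  by (simp add: connected_graph_def)




lemma part1:
  assumes U: "unicyclic V E" and lu: "{l,u} \<in> E" and dl: "degree V E l = 1"
    and uc: "u \<notin> cycle_vertices E" and vc: "v \<in> cycle_vertices E"
  shows "\<exists>a b c d. u_switch V E a b c d \<and> {l,v} \<in> two_switch E a b c d"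
proof -
  note ev = basics(1)[OF U lu dl]
  note ln = basics(2)[OF U lu dl]
  note lc = basics(3)[OF U lu dl]
  obtain xs0 where xs0: "is_cycle_list E xs0" "\<forall>ys. is_cycle_list E ys \<longrightarrow> cycle_edges ys = cycle_edges xs0"
    using basics(4)[OF U lu dl] by blast
  have conE: "connected_graph V E" using U by (simp add: unicyclic_def)
  obtain xs where xs: "is_cycle_list E xs" "v \<in> set xs" using vc unfolding cycle_vertices_def by blast
  have uxs: "u \<notin> set xs" using uc xs(1) cyc_vert by metis
  have lxs: "l \<notin> set xs" using lc xs(1) cyc_vert by metis
  obtain a b where ab: "a \<noteq> b" "{v,a} \<in> cycle_edges xs" "{v,b} \<in> cycle_edges xs"
    using cyc_two_nbrs[OF xs] by blast
  have axs: "a \<in> set xs" and bxs: "b \<in> set xs" using cyc_edge_vertices[OF ab(2), of a] cyc_edge_vertices[OF ab(3), of b] by simp_all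
  have abE: "{v,a} \<in> E" "{v,b} \<in> E" using ab cyc_edge_in[OF xs(1)] by blast+
  have "\<exists>w. {v,w} \<in> cycle_edges xs \<and> {u,w} \<notin> E"
  proof (rule ccontr)
    assume "\<not> ?thesis"
    then have ua: "{u,a} \<in> E" and ub: "{u,b} \<in> E" using ab by blast+
    let ?G = "E - {{u,a}}"
    have "adj ?G u b" using ub ab(1) by (auto simp: adj_def doubleton_eq_iff)
    moreover have "adj ?G b v" using abE uxs bxs xs(2) by (auto simp: adj_def doubleton_eq_iff insert_commute)
    moreover have "adj ?G v a" using abE uxs axs xs(2) by (auto simp: adj_def doubleton_eq_iff)
    ultimately have "(adj ?G)\<^sup>*\<^sup>* u a" by (meson converse_rtranclp_into_rtranclp r_into_rtranclp)
    then obtain zs where "is_cycle_list E zs" "u \<in> set zs"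
      using path_cycle[OF ua] ev[OF ua] by blast
    then show False using uc cyc_vert by metis
  qed
  then obtain w where vw: "{v,w} \<in> cycle_edges xs" and uw: "{u,w} \<notin> E" by blast
  have wxs: "w \<in> set xs" using cyc_edge_vertices[OF vw, of w] by simp
  have vwE: "{v,w} \<in> E" using vw cyc_edge_in[OF xs(1)] by blast
  have vV: "v \<in> V" and wV: "w \<in> V" and vnw: "v \<noteq> w" using ev[OF vwE] by auto
  have uV: "u \<in> V" and lV: "l \<in> V" and lnu: "l \<noteq> u" using ev[OF lu] by auto
  have uv: "u \<noteq> v" "u \<noteq> w" "l \<noteq> v" "l \<noteq> w" using uxs lxs xs(2) wxs by auto
  have lv: "{l,v} \<notin> E" using ln uv by blast
  have ich: "interchangeable E l u v w"
    unfolding interchangeable_def using lu vwE uv lnu lv uw by auto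
  define E' where "E' = (E - {{l,u},{v,w}}) \<union> {{l,v},{u,w}}"
  have ts: "two_switch E l u v w = E'" using ich by (simp add: two_switch_def E'_def)
  define G where "G = (E - {{l,u},{v,w}}) \<union> {{l,v}}"
  have GE': "G \<subseteq> E'" by (auto simp: G_def E'_def)
  have GE'u: "G \<subseteq> E' - {{u,w}}" using uw uv lnu by (auto simp: G_def E'_def doubleton_eq_iff)
  have DG: "cycle_edges xs - {{v,w}} \<subseteq> G"
  proof
    fix g assume g: "g \<in> cycle_edges xs - {{v,w}}"
    then have "g \<in> E" using cyc_edge_in[OF xs(1)] by blast
    moreover have "g \<noteq> {l,u}" using g lxs cyc_edge_vertices[of g xs l] by auto
    ultimately show "g \<in> G" using g by (auto simp: G_def)
  qed
  have vwG: "(adj G)\<^sup>*\<^sup>* v w" using rt_mono[OF cyc_conn[OF xs(1) vw] DG] .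
  have vwE': "(adj E')\<^sup>*\<^sup>* v w" using rt_mono[OF vwG GE'] .
  have sg': "simple_graph V E'"
  proof -
    have sgE: "simple_graph V E" using U by (simp add: unicyclic_def)
    show ?thesis unfolding simple_graph_def
    proof (intro conjI ballI)
      show "finite V" using sgE by (simp add: simple_graph_def)
      fix e assume "e \<in> E'"
      then consider "e \<in> E" | "e = {l,v}" | "e = {u,w}" by (auto simp: E'_def)
      then show "\<exists>x y. x \<noteq> y \<and> x \<in> V \<and> y \<in> V \<and> e = {x, y}"
      proof cases
        case 1 then show ?thesis using sgE unfolding simple_graph_def by blast
      next
        case 2 then show ?thesis using lV vV uv by blast
      next
        case 3 then show ?thesis using uV wV uv by blast
      qed
    qed
  qed
  have luE': "(adj E')\<^sup>*\<^sup>* l u"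
  proof -
    have "adj E' l v" "adj E' w u" by (auto simp: adj_def E'_def insert_commute)
    then show ?thesis using vwE' by (meson converse_rtranclp_into_rtranclp rtranclp.rtrancl_into_rtrancl)
  qed
  have stepE: "(adj E')\<^sup>*\<^sup>* p q" if pqa: "adj E p q" for p q
  proof -
    consider "{p,q} = {l,u}" | "{p,q} = {v,w}" | "{p,q} \<in> E'" using pqa unfolding adj_def E'_def by blast
    then show ?thesis
    proof cases
      case 1 then show ?thesis using rt_doubleton[OF luE'] by blast
    next
      case 2 then show ?thesis using rt_doubleton[OF vwE'] by blast
    next
      case 3 then show ?thesis by (rule edge_rt)
    qed
  qed
  have con': "connected_graph V E'"
  proof -
    have "(adj E')\<^sup>*\<^sup>* x y" if "x \<in> V" "y \<in> V" for x y
      using walk_map[where f="\<lambda>x. x", OF stepE conn_rt[OF conE that]] by simp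
    then show ?thesis using conE by (simp add: connected_graph_def)
  qed
  define f where "f = (\<lambda>x. if x = l then u else x)"
  have stepG: "(adj G)\<^sup>*\<^sup>* (f p) (f q)" if pq: "adj E p q" for p q
  proof -
    consider "{p,q} = {l,u}" | "{p,q} = {v,w}" | "{p,q} \<noteq> {l,u} \<and> {p,q} \<noteq> {v,w}" by blast
    then show ?thesis
    proof cases
      case 1 then have "f p = f q" by (auto simp: f_def doubleton_eq_iff)
      then show ?thesis by simp
    next
      case 2 then have "f p = p" "f q = q" using uv by (auto simp: f_def doubleton_eq_iff)
      then show ?thesis using 2 rt_doubleton[OF vwG] by simp
    next
      case 3
      have pqE: "{p,q} \<in> E" using pq by (simp add: adj_def)
      have "p \<noteq> l" using 3 ln pqE by blast
      moreover have "q \<noteq> l" using 3 ln pqE by (metis insert_commute)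
      moreover have "{p,q} \<in> G" using 3 pqE by (auto simp: G_def)
      ultimately show ?thesis by (simp add: f_def edge_rt)
    qed
  qed
  have "(adj G)\<^sup>*\<^sup>* (f u) (f v)" using walk_map[OF stepG conn_rt[OF conE uV vV]] .
  then have "(adj G)\<^sup>*\<^sup>* u v" using lnu uv by (simp add: f_def)
  then have "(adj G)\<^sup>*\<^sup>* u w" using vwG by (rule rtranclp_trans)
  then have uwc: "(adj (E' - {{u,w}}))\<^sup>*\<^sup>* u w" using GE'u by (rule rt_mono)
  obtain zs where zs: "is_cycle_list E' zs"
    using path_cycle[OF _ _ uwc] uv by (auto simp: E'_def)
  have lnb': "x = v" if "{l,x} \<in> E'" for x
    using that ln uv lnu by (auto simp: E'_def doubleton_eq_iff)
  have vwn: "{v,w} \<notin> E'" using uv vnw by (auto simp: E'_def doubleton_eq_iff)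
  have all: "\<forall>ys. is_cycle_list E' ys \<longrightarrow> {u,w} \<in> cycle_edges ys"
  proof (intro allI impI)
    fix ys assume ys: "is_cycle_list E' ys"
    show "{u,w} \<in> cycle_edges ys"
    proof (rule ccontr)
      assume nuw: "{u,w} \<notin> cycle_edges ys"
      have lys: "l \<notin> set ys"
      proof
        assume "l \<in> set ys"
        then obtain a b where "a \<noteq> b" "{l,a} \<in> cycle_edges ys" "{l,b} \<in> cycle_edges ys"
          using cyc_two_nbrs[OF ys] by blast
        then show False using cyc_edge_in[OF ys] lnb' by blast
      qed
      have "cycle_edges ys \<subseteq> E"
      proof
        fix g assume g: "g \<in> cycle_edges ys"
        then have "g \<in> E'" using cyc_edge_in[OF ys] by blast
        moreover have "g \<noteq> {l,v}" using g lys cyc_edge_vertices[of g ys l] by auto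
        ultimately show "g \<in> E" using nuw g by (auto simp: E'_def)
      qed
      then have "is_cycle_list E ys" using cyc_mono[OF ys] by blast
      then have "cycle_edges ys = cycle_edges xs" using xs0(2) xs(1) by metis
      then have "{v,w} \<in> E'" using vw cyc_edge_in[OF ys] by blast
      then show False using vwn by blast
    qed
  qed
  have "\<forall>ys. is_cycle_list E' ys \<longrightarrow> cycle_edges ys = cycle_edges zs"
    using common_edge[OF all] zs by blast
  then have "unicyclic V E'" using uni_intro[OF sg' con' zs] by blast
  then have "u_switch V E l u v w" using ich ts by (simp add: u_switch_def)
  moreover have "{l,v} \<in> two_switch E l u v w" using ts by (simp add: E'_def)
  ultimately show ?thesis by blast
qed

lemma part2:
  assumes U: "unicyclic V E" and lu: "{l,u} \<in> E" and dl: "degree V E l = 1"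
    and uc: "u \<notin> cycle_vertices E" and vV: "v \<in> V" and vc: "v \<notin> cycle_vertices E"
    and vu: "v \<noteq> u" and dv: "degree V E v \<ge> 2"
  shows "\<exists>a b c d. u_switch V E a b c d \<and> {l,v} \<in> two_switch E a b c d"
proof -
  note ev = basics(1)[OF U lu dl]
  note ln = basics(2)[OF U lu dl]
  note lc = basics(3)[OF U lu dl]
  obtain xs0 where xs0: "is_cycle_list E xs0" "\<forall>ys. is_cycle_list E ys \<longrightarrow> cycle_edges ys = cycle_edges xs0"
    using basics(4)[OF U lu dl] by blast
  have sgE: "simple_graph V E" using U by (simp add: unicyclic_def)
  have conE: "connected_graph V E" using U by (simp add: unicyclic_def)
  have NC: "\<not> (adj (E - {{v,w}}))\<^sup>*\<^sup>* v w" if vw: "{v,w} \<in> E" for w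
  proof
    assume c: "(adj (E - {{v,w}}))\<^sup>*\<^sup>* v w"
    have "v \<noteq> w" using ev[OF vw] by simp
    then obtain zs where "is_cycle_list E zs" "v \<in> set zs" using path_cycle[OF vw _ c] by blast
    then have "v \<in> cycle_vertices E" by (rule cyc_vert)
    then show False using vc by simp
  qed
  let ?S = "{w \<in> V. {v, w} \<in> E}"
  have cS: "card ?S \<ge> 2" using dv by (simp add: degree_def)
  have fS: "finite ?S" using sgE by (simp add: simple_graph_def)
  have "?S \<noteq> {}" using cS by (metis card.empty not_numeral_le_zero)
  then obtain w1 where w1: "w1 \<in> ?S" by blast
  have "card (?S - {w1}) \<ge> 1" using cS w1 fS by (simp add: card_Diff_singleton)
  then have "?S - {w1} \<noteq> {}" by (metis card.empty not_one_le_zero)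
  then obtain w2 where w2: "w2 \<in> ?S" "w2 \<noteq> w1" by blast
  have vw1: "{v,w1} \<in> E" and vw2: "{v,w2} \<in> E" using w1 w2 by simp_all
  have "\<exists>w. {v,w} \<in> E \<and> (adj (E - {{v,w}}))\<^sup>*\<^sup>* v u"
  proof (cases "(adj (E - {{v,w1}}))\<^sup>*\<^sup>* v u")
    case True then show ?thesis using vw1 by blast
  next
    case False
    have uV: "u \<in> V" using ev[OF lu] by simp
    have "(adj E)\<^sup>*\<^sup>* v u" using conn_rt[OF conE vV uV] .
    from three_way[OF this vw1] False have h1: "(adj (E - {{v,w1}}))\<^sup>*\<^sup>* w1 u" by blast
    have vnw1: "v \<noteq> w1" using ev[OF vw1] by simp
    have e2: "{v,w2} \<in> E - {{v,w1}}" using vw2 w2(2) vnw1 by (auto simp: doubleton_eq_iff)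
    let ?G0 = "E - {{v,w1}} - {{v,w2}}"
    have G01: "?G0 \<subseteq> E - {{v,w1}}" by blast
    have G02: "?G0 \<subseteq> E - {{v,w2}}" by blast
    from three_way[OF h1 e2]
    consider "(adj ?G0)\<^sup>*\<^sup>* w1 u" | "(adj ?G0)\<^sup>*\<^sup>* v u" | "(adj ?G0)\<^sup>*\<^sup>* w2 u" by blast
    then show ?thesis
    proof cases
      case 1
      have "adj (E - {{v,w2}}) v w1" using e2 vw1 by (auto simp: adj_def)
      moreover have "(adj (E - {{v,w2}}))\<^sup>*\<^sup>* w1 u" using rt_mono[OF 1 G02] .
      ultimately have "(adj (E - {{v,w2}}))\<^sup>*\<^sup>* v u" by (rule converse_rtranclp_into_rtranclp)
      then show ?thesis using vw2 by blast
    next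
      case 2
      then have "(adj (E - {{v,w1}}))\<^sup>*\<^sup>* v u" using rt_mono[OF 2 G01] by simp
      then show ?thesis using False by simp
    next
      case 3
      have "adj (E - {{v,w1}}) v w2" using e2 by (simp add: adj_def)
      moreover have "(adj (E - {{v,w1}}))\<^sup>*\<^sup>* w2 u" using rt_mono[OF 3 G01] .
      ultimately have "(adj (E - {{v,w1}}))\<^sup>*\<^sup>* v u" by (rule converse_rtranclp_into_rtranclp)
      then show ?thesis using False by simp
    qed
  qed
  then obtain w where vwE: "{v,w} \<in> E" and vuw: "(adj (E - {{v,w}}))\<^sup>*\<^sup>* v u" by blast
  have wV: "w \<in> V" and vnw: "v \<noteq> w" using ev[OF vwE] by auto
  have uV: "u \<in> V" and lV: "l \<in> V" and lnu: "l \<noteq> u" using ev[OF lu] by auto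
  have NCw: "\<not> (adj (E - {{v,w}}))\<^sup>*\<^sup>* v w" using NC[OF vwE] .
  have unw: "u \<noteq> w" using NCw vuw by blast
  have uw: "{u,w} \<notin> E"
  proof
    assume "{u,w} \<in> E"
    then have "adj (E - {{v,w}}) u w" using vu by (auto simp: adj_def doubleton_eq_iff)
    with vuw have "(adj (E - {{v,w}}))\<^sup>*\<^sup>* v w" by (rule rtranclp.rtrancl_into_rtrancl)
    then show False using NCw by simp
  qed
  have lnv: "l \<noteq> v" using dl dv by auto
  have lv: "{l,v} \<notin> E" using ln vu by blast
  have lnw: "l \<noteq> w" using vwE lv by (metis insert_commute)
  have ich: "interchangeable E l u v w"
    unfolding interchangeable_def using lu vwE lnv lnw vu unw lnu lv uw by auto
  define E' where "E' = (E - {{l,u},{v,w}}) \<union> {{l,v},{u,w}}"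
  have ts: "two_switch E l u v w = E'" using ich by (simp add: two_switch_def E'_def)
  have sg': "simple_graph V E'"
    unfolding simple_graph_def
  proof (intro conjI ballI)
    show "finite V" using sgE by (simp add: simple_graph_def)
    fix e assume "e \<in> E'"
    then consider "e \<in> E" | "e = {l,v}" | "e = {u,w}" by (auto simp: E'_def)
    then show "\<exists>x y. x \<noteq> y \<and> x \<in> V \<and> y \<in> V \<and> e = {x, y}"
    proof cases
      case 1 then show ?thesis using sgE unfolding simple_graph_def by blast
    next
      case 2 then show ?thesis using lV vV lnv by blast
    next
      case 3 then show ?thesis using uV wV unw by blast
    qed
  qed
  define f where "f = (\<lambda>x. if x = l then u else x)"
  have stepG: "(adj E')\<^sup>*\<^sup>* (f p) (f q)" if pq: "adj (E - {{v,w}}) p q" for p q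
  proof (cases "{p,q} = {l,u}")
    case True then have "f p = f q" by (auto simp: f_def doubleton_eq_iff)
    then show ?thesis by simp
  next
    case False
    have pqE: "{p,q} \<in> E" and pqw: "{p,q} \<noteq> {v,w}" using pq by (auto simp: adj_def)
    have "p \<noteq> l" using False ln pqE by blast
    moreover have "q \<noteq> l" using False ln pqE by (metis insert_commute)
    moreover have "{p,q} \<in> E'" using False pqE pqw by (auto simp: E'_def)
    ultimately show ?thesis by (simp add: f_def edge_rt)
  qed
  have "(adj E')\<^sup>*\<^sup>* (f v) (f u)" using walk_map[OF stepG vuw] .
  then have vuE': "(adj E')\<^sup>*\<^sup>* v u" using lnv lnu by (simp add: f_def)
  have luE': "(adj E')\<^sup>*\<^sup>* l u"
  proof -
    have "adj E' l v" by (auto simp: adj_def E'_def)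
    then show ?thesis using vuE' by (rule converse_rtranclp_into_rtranclp)
  qed
  have vwE': "(adj E')\<^sup>*\<^sup>* v w"
  proof -
    have "adj E' u w" by (auto simp: adj_def E'_def)
    with vuE' show ?thesis by (rule rtranclp.rtrancl_into_rtrancl)
  qed
  have stepE: "(adj E')\<^sup>*\<^sup>* p q" if pqa: "adj E p q" for p q
  proof -
    consider "{p,q} = {l,u}" | "{p,q} = {v,w}" | "{p,q} \<in> E'" using pqa unfolding adj_def E'_def by blast
    then show ?thesis
    proof cases
      case 1 then show ?thesis using rt_doubleton[OF luE'] by blast
    next
      case 2 then show ?thesis using rt_doubleton[OF vwE'] by blast
    next
      case 3 then show ?thesis by (rule edge_rt)
    qed
  qed
  have con': "connected_graph V E'"
  proof -
    have "(adj E')\<^sup>*\<^sup>* x y" if "x \<in> V" "y \<in> V" for x y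
      using walk_map[where f="\<lambda>x. x", OF stepE conn_rt[OF conE that]] by simp
    then show ?thesis using conE by (simp add: connected_graph_def)
  qed
  have uxs0: "u \<notin> set xs0" using uc xs0(1) cyc_vert by metis
  have vxs0: "v \<notin> set xs0" using vc xs0(1) cyc_vert by metis
  have "cycle_edges xs0 \<subseteq> E'"
  proof
    fix g assume g: "g \<in> cycle_edges xs0"
    then have "g \<in> E" using cyc_edge_in[OF xs0(1)] by blast
    moreover have "g \<noteq> {l,u}" using g uxs0 cyc_edge_vertices[of g xs0 u] by auto
    moreover have "g \<noteq> {v,w}" using g vxs0 cyc_edge_vertices[of g xs0 v] by auto
    ultimately show "g \<in> E'" by (auto simp: E'_def)
  qed
  then have cyc': "is_cycle_list E' xs0" using cyc_mono[OF xs0(1)] by blast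
  have lnb': "x = v" if "{l,x} \<in> E'" for x
    using that ln lnv lnu lnw by (auto simp: E'_def doubleton_eq_iff)
  have uniq: "\<forall>ys. is_cycle_list E' ys \<longrightarrow> cycle_edges ys = cycle_edges xs0"
  proof (intro allI impI)
    fix ys assume ys: "is_cycle_list E' ys"
    have lys: "l \<notin> set ys"
    proof
      assume "l \<in> set ys"
      then obtain a b where "a \<noteq> b" "{l,a} \<in> cycle_edges ys" "{l,b} \<in> cycle_edges ys"
        using cyc_two_nbrs[OF ys] by blast
      then show False using cyc_edge_in[OF ys] lnb' by blast
    qed
    have sub: "g \<in> E - {{l,u},{v,w}}" if g: "g \<in> cycle_edges ys" "g \<noteq> {u,w}" for g
    proof -
      have "g \<in> E'" using g cyc_edge_in[OF ys] by blast
      moreover have "g \<noteq> {l,v}" using g lys cyc_edge_vertices[of g ys l] by auto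
      ultimately show ?thesis using g by (auto simp: E'_def)
    qed
    show "cycle_edges ys = cycle_edges xs0"
    proof (cases "{u,w} \<in> cycle_edges ys")
      case True
      have "(adj (cycle_edges ys - {{u,w}}))\<^sup>*\<^sup>* u w" using cyc_conn[OF ys True] .
      moreover have "cycle_edges ys - {{u,w}} \<subseteq> E - {{v,w}}" using sub by blast
      ultimately have "(adj (E - {{v,w}}))\<^sup>*\<^sup>* u w" by (rule rt_mono)
      then have "(adj (E - {{v,w}}))\<^sup>*\<^sup>* v w" using vuw by (meson rtranclp_trans)
      then show ?thesis using NCw by simp
    next
      case False
      have "cycle_edges ys \<subseteq> E" using sub False by blast
      then have "is_cycle_list E ys" using cyc_mono[OF ys] by blast
      then show ?thesis using xs0(2) by blast
    qed
  qed
  have "unicyclic V E'" using uni_intro[OF sg' con' cyc' uniq] .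
  then have "u_switch V E l u v w" using ich ts by (simp add: u_switch_def)
  moreover have "{l,v} \<in> two_switch E l u v w" using ts by (simp add: E'_def)
  ultimately show ?thesis by blast
qed

theorem lemma3p1:
  fixes V :: "'a set" and E :: "'a set set" and l u v :: 'a
  assumes "unicyclic V E"
    and "{l, u} \<in> E"
    and "degree V E l = 1"
    and "u \<notin> cycle_vertices E"
  shows "(v \<in> cycle_vertices E \<longrightarrow>
            (\<exists>a b c d. u_switch V E a b c d \<and> {l, v} \<in> two_switch E a b c d))
       \<and> (v \<in> V \<and> v \<notin> cycle_vertices E \<and> v \<noteq> u \<and> degree V E v \<ge> 2 \<longrightarrow>
            (\<exists>a b c d. u_switch V E a b c d \<and> {l, v} \<in> two_switch E a b c d))"
  using part1[OF assms] part2[OF assms] by blast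

end
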